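(* Let $n\geq 5$, let $S$ be the set of all $3$-cycles in $S_n$, let $CAG_n=\mathrm{Cay}(A_n,S)$, and let $G_e$ be the stabilizer of the identity vertex $e$ in $\mathrm{Aut}(CAG_n)$. For $1\leq i<j<k\leq n$ put $\Delta_{i,j,k}=\{(i,j,k),(i,k,j)\}$ and $\Delta=\{\Delta_{i,j,k}\mid 1\leq i<j<k\leq n\}$. Let $L_n$ be the graph with vertex set $\Delta$ in which $\Delta_{i,j,k}$ and $\Delta_{p,q,r}$ are adjacent iff $\{i,j,k\}\cap\{p,q,r\}=\emptyset$. Each $g\in G_e$ permutes the members of $\Delta$ (i.e. maps each $\Delta_{i,j,k}$ onto some member of $\Delta$), giving an action of $G_e$ on $\Delta$; let $K$ be the kernel of this action, so $G_e/K$ is a permutation group on $\Delta$. Then $G_e/K\leq\mathrm{Aut}(L_n)$, i.e. every permutation of $\Delta$ induced by an element of $G_e$ is an automorphism of $L_n$.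
   Context: For a finite group $\Gamma$ and a subset $T\subseteq\Gamma$ with $e\notin T$ and $T=T^{-1}$, the Cayley graph $\mathrm{Cay}(\Gamma,T)$ is the undirected graph with vertex set $\Gamma$ and edge set $\{\{\gamma,t\gamma\}\mid \gamma\in\Gamma, t\in T\}$. Elements of $G_e$ map $S$ (the neighbourhood of $e$) to itself. *)

theory Defs
  imports "HOL-Combinatorics.Permutations"
begin

text \<open>Permutations of {1..n} are functions nat => nat; composition is function
composition. The 3-cycle (a,b,c) maps a to b, b to c, c to a.\<close>

definition cyc3 :: "nat \<Rightarrow> nat \<Rightarrow> nat \<Rightarrow> (nat \<Rightarrow> nat)" where
  "cyc3 a b c = (\<lambda>x. if x = a then b else if x = b then c else if x = c then a else x)"

definition alt_group_set :: "nat \<Rightarrow> (nat \<Rightarrow> nat) set" where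
  "alt_group_set n = {p. p permutes {1..n} \<and> evenperm p}"

definition three_cycles :: "nat \<Rightarrow> (nat \<Rightarrow> nat) set" where
  "three_cycles n = {cyc3 a b c | a b c. a \<in> {1..n} \<and> b \<in> {1..n} \<and> c \<in> {1..n}
                         \<and> a \<noteq> b \<and> b \<noteq> c \<and> a \<noteq> c}"

definition CAG_adj :: "nat \<Rightarrow> (nat \<Rightarrow> nat) \<Rightarrow> (nat \<Rightarrow> nat) \<Rightarrow> bool" where
  "CAG_adj n x y \<longleftrightarrow> x \<in> alt_group_set n \<and> y \<in> alt_group_set n \<and>
      ((\<exists>t \<in> three_cycles n. y = t \<circ> x) \<or> (\<exists>t \<in> three_cycles n. x = t \<circ> y))"

definition CAG_aut :: "nat \<Rightarrow> ((nat \<Rightarrow> nat) \<Rightarrow> (nat \<Rightarrow> nat)) set" where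
  "CAG_aut n = {f. bij_betw f (alt_group_set n) (alt_group_set n) \<and>
      (\<forall>x \<in> alt_group_set n. \<forall>y \<in> alt_group_set n. CAG_adj n x y \<longleftrightarrow> CAG_adj n (f x) (f y))}"

definition CAG_stab :: "nat \<Rightarrow> ((nat \<Rightarrow> nat) \<Rightarrow> (nat \<Rightarrow> nat)) set" where
  "CAG_stab n = {f \<in> CAG_aut n. f id = id}"

definition Delta_ijk :: "nat \<Rightarrow> nat \<Rightarrow> nat \<Rightarrow> (nat \<Rightarrow> nat) set" where
  "Delta_ijk i j k = {cyc3 i j k, cyc3 i k j}"

definition Delta :: "nat \<Rightarrow> (nat \<Rightarrow> nat) set set" where
  "Delta n = {Delta_ijk i j k | i j k. 1 \<le> i \<and> i < j \<and> j < k \<and> k \<le> n}"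

definition L_adj :: "nat \<Rightarrow> (nat \<Rightarrow> nat) set \<Rightarrow> (nat \<Rightarrow> nat) set \<Rightarrow> bool" where
  "L_adj n D E \<longleftrightarrow> (\<exists>i j k p q r. 1 \<le> i \<and> i < j \<and> j < k \<and> k \<le> n \<and>
      1 \<le> p \<and> p < q \<and> q < r \<and> r \<le> n \<and>
      D = Delta_ijk i j k \<and> E = Delta_ijk p q r \<and> {i, j, k} \<inter> {p, q, r} = {})"

definition L_aut :: "nat \<Rightarrow> ((nat \<Rightarrow> nat) set \<Rightarrow> (nat \<Rightarrow> nat) set) \<Rightarrow> bool" where
  "L_aut n \<phi> \<longleftrightarrow> bij_betw \<phi> (Delta n) (Delta n) \<and>
      (\<forall>D \<in> Delta n. \<forall>E \<in> Delta n. L_adj n D E \<longleftrightarrow> L_adj n (\<phi> D) (\<phi> E))"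

end

theory Submission
  imports Defs
begin

definition mv :: "(nat \<Rightarrow> nat) \<Rightarrow> nat set" where "mv f = {x. f x \<noteq> x}"

lemma cyc3_mv: "a \<noteq> b \<Longrightarrow> b \<noteq> c \<Longrightarrow> a \<noteq> c \<Longrightarrow> mv (cyc3 a b c) = {a,b,c}"
  by (auto simp: mv_def cyc3_def)

lemma cyc3_rot: "a \<noteq> b \<Longrightarrow> b \<noteq> c \<Longrightarrow> a \<noteq> c \<Longrightarrow> cyc3 a b c = cyc3 b c a"
  by (auto simp: cyc3_def fun_eq_iff)

lemma cyc3_sq: "a \<noteq> b \<Longrightarrow> b \<noteq> c \<Longrightarrow> a \<noteq> c \<Longrightarrow> cyc3 a b c \<circ> cyc3 a b c = cyc3 a c b"
  by (auto simp: cyc3_def fun_eq_iff)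

lemma cyc3_inv: "a \<noteq> b \<Longrightarrow> b \<noteq> c \<Longrightarrow> a \<noteq> c \<Longrightarrow> cyc3 a c b \<circ> cyc3 a b c = id"
  by (auto simp: cyc3_def fun_eq_iff)

lemma cyc3_comp: "distinct [x,y,c,d] \<Longrightarrow> cyc3 x y d = cyc3 x c d \<circ> cyc3 x y c"
  by (auto simp: cyc3_def fun_eq_iff)

lemma cyc3_transp: "a \<noteq> b \<Longrightarrow> b \<noteq> c \<Longrightarrow> a \<noteq> c \<Longrightarrow> cyc3 a b c = transpose a b \<circ> transpose b c"
  by (auto simp: cyc3_def fun_eq_iff transpose_def)

lemma cyc3_alt: "a \<in> {1..n} \<Longrightarrow> b \<in> {1..n} \<Longrightarrow> c \<in> {1..n} \<Longrightarrow> a \<noteq> b \<Longrightarrow> b \<noteq> c \<Longrightarrow> a \<noteq> c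
  \<Longrightarrow> cyc3 a b c \<in> alt_group_set n"
  unfolding alt_group_set_def cyc3_transp
  by (auto intro!: permutes_compose permutes_swap_id simp: evenperm_comp evenperm_swap permutation_swap_id)

lemma T_def2: "s \<in> three_cycles n \<longleftrightarrow> (\<exists>a b c. a \<in> {1..n} \<and> b \<in> {1..n} \<and> c \<in> {1..n} \<and> a \<noteq> b \<and> b \<noteq> c \<and> a \<noteq> c \<and> s = cyc3 a b c)"
  unfolding three_cycles_def by blast

lemma T_alt: "s \<in> three_cycles n \<Longrightarrow> s \<in> alt_group_set n"
  using cyc3_alt unfolding T_def2 by blast

lemma T_mv: "s \<in> three_cycles n \<Longrightarrow> finite (mv s) \<and> card (mv s) = 3 \<and> mv s \<subseteq> {1..n}"
  unfolding T_def2 by (auto simp: cyc3_mv)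

lemma T_sq: "s \<in> three_cycles n \<Longrightarrow> s \<circ> s \<in> three_cycles n \<and> mv (s \<circ> s) = mv s \<and> s \<circ> s \<circ> s = id \<and> (s \<circ> s) \<circ> (s \<circ> s) = s"
  unfolding T_def2 apply (elim exE conjE)
  apply (simp add: cyc3_sq cyc3_mv)
  apply (intro conjI)
   apply blast
  apply (auto simp: cyc3_def fun_eq_iff)
  done

lemma T_inj: "s \<in> three_cycles n \<Longrightarrow> inj s"
  using T_alt permutes_inj unfolding alt_group_set_def by blast

lemma T_moved4: "s \<in> three_cycles n \<Longrightarrow> distinct [w,x,y,z] \<Longrightarrow> s w \<noteq> w \<Longrightarrow> s x \<noteq> x \<Longrightarrow> s y \<noteq> y \<Longrightarrow> s z \<noteq> z \<Longrightarrow> False"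
proof -
  assume s: "s \<in> three_cycles n" and d: "distinct [w,x,y,z]" and m: "s w \<noteq> w" "s x \<noteq> x" "s y \<noteq> y" "s z \<noteq> z"
  have "{w,x,y,z} \<subseteq> mv s" using m by (auto simp: mv_def)
  hence "card {w,x,y,z} \<le> card (mv s)" using T_mv[OF s] by (intro card_mono) auto
  thus False using d T_mv[OF s] by simp
qed

lemma T_supp: assumes s: "s \<in> three_cycles n" and m: "mv s = {x,y,z}" and d: "x \<noteq> y" "y \<noteq> z" "x \<noteq> z"
  shows "s = cyc3 x y z \<or> s = cyc3 x z y"
proof -
  obtain a b c where abc: "a \<noteq> b" "b \<noteq> c" "a \<noteq> c" "s = cyc3 a b c" using s unfolding T_def2 by blast
  hence e: "{a,b,c} = {x,y,z}" using m cyc3_mv by simp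
  have "\<exists>p q. p \<noteq> q \<and> x \<noteq> p \<and> x \<noteq> q \<and> s = cyc3 x p q \<and> {p,q} = {y,z}"
  proof -
    have yz: "{y,z} = {x,y,z} - {x}" using d by auto
    have "x \<in> {a,b,c}" using e by auto
    moreover have "x = a \<Longrightarrow> ?thesis"
    proof -
      assume xa: "x = a"
      have "{b,c} = {a,b,c} - {a}" using abc by auto
      hence "{b,c} = {y,z}" using yz e xa by simp
      thus ?thesis using abc xa by blast
    qed
    moreover have "x = b \<Longrightarrow> ?thesis"
    proof -
      assume xa: "x = b"
      have "{c,a} = {a,b,c} - {b}" using abc by auto
      hence "{c,a} = {y,z}" using yz e xa by simp
      thus ?thesis using abc xa cyc3_rot[of a b c] by metis
    qed
    moreover have "x = c \<Longrightarrow> ?thesis"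
    proof -
      assume xa: "x = c"
      have "{a,b} = {a,b,c} - {c}" using abc by auto
      hence "{a,b} = {y,z}" using yz e xa by simp
      thus ?thesis using abc xa cyc3_rot[of a b c] cyc3_rot[of b c a] by metis
    qed
    ultimately show ?thesis by blast
  qed
  then obtain p q where "s = cyc3 x p q" "{p,q} = {y,z}" by blast
  thus ?thesis by (auto simp: doubleton_eq_iff)
qed

abbreviation "T n \<equiv> three_cycles n"

lemma adj_iff: "CAG_adj n x y \<longleftrightarrow> x \<in> alt_group_set n \<and> y \<in> alt_group_set n \<and> (\<exists>u\<in>T n. y = u \<circ> x)"
proof
  assume h: "CAG_adj n x y"
  then have xy: "x \<in> alt_group_set n" "y \<in> alt_group_set n" unfolding CAG_adj_def by auto
  from h consider "\<exists>u\<in>T n. y = u \<circ> x" | "\<exists>u\<in>T n. x = u \<circ> y" unfolding CAG_adj_def by blast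
  then show "x \<in> alt_group_set n \<and> y \<in> alt_group_set n \<and> (\<exists>u\<in>T n. y = u \<circ> x)"
  proof cases
    case 2
    then obtain u where u: "u \<in> T n" "x = u \<circ> y" by blast
    have "(u \<circ> u) \<circ> x = (u \<circ> u \<circ> u) \<circ> y" using u by (simp add: o_assoc)
    also have "\<dots> = y" using T_sq[OF u(1)] by simp
    finally show ?thesis using xy T_sq[OF u(1)] by metis
  qed (use xy in auto)
qed (auto simp: CAG_adj_def)

lemma adj_sym: "CAG_adj n x y \<longleftrightarrow> CAG_adj n y x"
  unfolding CAG_adj_def by blast

lemma adj_irrefl: "\<not> CAG_adj n x x"
proof
  assume "CAG_adj n x x"
  then obtain u where u: "u \<in> T n" "x = u \<circ> x" and x: "x \<in> alt_group_set n" by (auto simp: adj_iff)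
  have "surj x" using x permutes_surj unfolding alt_group_set_def by blast
  hence "u = id" using u(2) by (metis comp_id fun.map_comp surj_iff)
  hence "mv u = {}" by (simp add: mv_def)
  thus False using T_mv[OF u(1)] by simp
qed

lemma adj_sq: "s \<in> T n \<Longrightarrow> CAG_adj n s (s \<circ> s)"
  using T_sq[of s n] T_alt[of s n] T_alt[of "s \<circ> s" n] by (auto simp: adj_iff)

lemma adj_share: assumes r: "r \<in> T n" and s: "s \<in> T n" and a: "CAG_adj n r s"
  shows "card (mv r \<inter> mv s) \<ge> 2"
proof (rule ccontr)
  assume c: "\<not> ?thesis"
  obtain u where u: "u \<in> T n" "s = u \<circ> r" using a by (auto simp: adj_iff)
  let ?R = "mv r" and ?S = "mv s" and ?U = "mv u"
  have fR: "finite ?R" "card ?R = 3" and fS: "finite ?S" "card ?S = 3" and fU: "finite ?U" "card ?U = 3"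
    using T_mv r s u(1) by auto
  have injr: "inj r" using T_inj r by blast
  have 1: "?S - ?R \<subseteq> ?U" using u(2) by (auto simp: mv_def)
  have 2: "r ` (?R - ?S) \<subseteq> ?U" using u(2) by (auto simp: mv_def)
  have 3: "r ` (?R - ?S) \<subseteq> ?R" using injr by (auto simp: mv_def inj_eq)
  have 4: "(?S - ?R) \<inter> r ` (?R - ?S) = {}" using 3 by auto
  have cS: "card (?S - ?R) \<ge> 2" using c fS card_Diff_subset_Int[of ?S ?R] by (simp add: Int_commute)
  have cR: "card (r ` (?R - ?S)) \<ge> 2" using c fR card_Diff_subset_Int[of ?R ?S] card_image[of r "?R - ?S"] injr
    by (simp add: inj_on_subset)
  have "card ((?S - ?R) \<union> r ` (?R - ?S)) = card (?S - ?R) + card (r ` (?R - ?S))"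
    using 4 fR fS by (intro card_Un_disjoint) auto
  moreover have "card ((?S - ?R) \<union> r ` (?R - ?S)) \<le> card ?U" using 1 2 fU by (intro card_mono) auto
  ultimately show False using cS cR fU by simp
qed

lemma adjL: assumes "p \<in> {1..n}" "q \<in> {1..n}" "c \<in> {1..n}" "d \<in> {1..n}" "distinct [p,q,c,d]"
  shows "CAG_adj n (cyc3 p q c) (cyc3 p q d)"
proof -
  have "cyc3 p c d \<in> T n" using assms unfolding T_def2 by auto
  moreover have "cyc3 p q d = cyc3 p c d \<circ> cyc3 p q c" using cyc3_comp assms(5) by blast
  moreover have "cyc3 p q d \<in> T n" "cyc3 p q c \<in> T n" using assms unfolding T_def2 by auto
  ultimately show ?thesis using T_alt by (auto simp: adj_iff)
qed

lemma nonadjL: assumes "distinct [p,q,c,d]"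
  shows "\<not> CAG_adj n (cyc3 p q c) (cyc3 p d q)"
proof
  assume "CAG_adj n (cyc3 p q c) (cyc3 p d q)"
  then obtain u where u: "u \<in> T n" "cyc3 p d q = u \<circ> cyc3 p q c" by (auto simp: adj_iff)
  hence "cyc3 p d q \<circ> cyc3 p c q = u \<circ> (cyc3 p q c \<circ> cyc3 p c q)" by (simp add: o_assoc)
  also have "cyc3 p q c \<circ> cyc3 p c q = id" using cyc3_inv[of p c q] assms by auto
  finally have uu: "u = cyc3 p d q \<circ> cyc3 p c q" by (simp add: o_def)
  show False
    by (rule T_moved4[OF u(1), of p c q d]) (use assms in \<open>auto simp: uu cyc3_def\<close>)
qed

lemma hs: assumes "p \<in> {1..n}" "q \<in> {1..n}" "c \<in> {1..n}" "d \<in> {1..n}" "distinct [p,q,c,d]"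
  shows "CAG_adj n (cyc3 p q c) (cyc3 p q d)" "\<not> CAG_adj n (cyc3 p q c) (cyc3 p d q)"
    "CAG_adj n (cyc3 p c q) (cyc3 p d q)" "\<not> CAG_adj n (cyc3 p c q) (cyc3 p q d)"
proof -
  show "CAG_adj n (cyc3 p q c) (cyc3 p q d)" using adjL assms by blast
  show "\<not> CAG_adj n (cyc3 p q c) (cyc3 p d q)" using nonadjL assms by blast
  have r1: "cyc3 p c q = cyc3 q p c" "cyc3 p d q = cyc3 q p d" "cyc3 p q d = cyc3 q d p"
    using assms cyc3_rot[of p c q] cyc3_rot[of c q p] cyc3_rot[of p d q] cyc3_rot[of d q p] cyc3_rot[of p q d]
    by (simp_all del: cyc3_rot)
  show "CAG_adj n (cyc3 p c q) (cyc3 p d q)" unfolding r1 using adjL[of q n p c d] assms by auto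
  show "\<not> CAG_adj n (cyc3 p c q) (cyc3 p q d)" unfolding r1 using nonadjL[of q p c d n] assms by auto
qed

lemma decomp: assumes r: "r \<in> T n" and s: "s \<in> T n" and c2: "card (mv r \<inter> mv s) = 2"
  shows "\<exists>p q c d. p \<in> {1..n} \<and> q \<in> {1..n} \<and> c \<in> {1..n} \<and> d \<in> {1..n} \<and> distinct [p,q,c,d] \<and>
     (r = cyc3 p q c \<or> r = cyc3 p c q) \<and> (s = cyc3 p q d \<or> s = cyc3 p d q)"
proof -
  obtain p q where pq: "mv r \<inter> mv s = {p,q}" "p \<noteq> q" using c2 by (metis card_2_iff)
  have fr: "finite (mv r)" "card (mv r) = 3" "mv r \<subseteq> {1..n}" using T_mv[OF r] by auto
  have fs: "finite (mv s)" "card (mv s) = 3" "mv s \<subseteq> {1..n}" using T_mv[OF s] by auto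
  have pqr: "{p,q} \<subseteq> mv r" and pqs: "{p,q} \<subseteq> mv s" using pq(1) by blast+
  have c2': "card {p,q} = 2" using pq(2) by simp
  have "card (mv r - {p,q}) = 1" using card_Diff_subset[OF _ pqr] fr(2) c2' by simp
  then obtain c where c: "mv r - {p,q} = {c}" by (metis One_nat_def card_1_singleton_iff)
  have "card (mv s - {p,q}) = 1" using card_Diff_subset[OF _ pqs] fs(2) c2' by simp
  then obtain d where d: "mv s - {p,q} = {d}" by (metis One_nat_def card_1_singleton_iff)
  have mr: "mv r = {p,q,c}" using c pqr by blast
  have ms: "mv s = {p,q,d}" using d pqs by blast
  have cpq: "c \<noteq> p" "c \<noteq> q" using c by blast+
  have dpq: "d \<noteq> p" "d \<noteq> q" using d by blast+
  have "c \<noteq> d"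
  proof
    assume "c = d"
    hence "c \<in> mv r \<inter> mv s" using mr ms by blast
    thus False using pq(1) cpq by blast
  qed
  hence dist: "distinct [p,q,c,d]" using cpq dpq pq(2) by simp
  have rng: "p \<in> {1..n}" "q \<in> {1..n}" "c \<in> {1..n}" "d \<in> {1..n}" using mr ms fr(3) fs(3) by blast+
  have H1: "r = cyc3 p q c \<or> r = cyc3 p c q" using T_supp[OF r mr] dist by simp
  have H2: "s = cyc3 p q d \<or> s = cyc3 p d q" using T_supp[OF s ms] dist by simp
  show ?thesis
    apply (rule exI[of _ p], rule exI[of _ q], rule exI[of _ c], rule exI[of _ d])
    using dist rng H1 H2 by (intro conjI)
qed

lemma share2: assumes r: "r \<in> T n" and s: "s \<in> T n" and c2: "card (mv r \<inter> mv s) = 2"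
  shows "(CAG_adj n r s \<or> CAG_adj n r (s \<circ> s)) \<and> \<not> (CAG_adj n r s \<and> CAG_adj n r (s \<circ> s))"
proof -
  obtain p q c d where h: "p \<in> {1..n}" "q \<in> {1..n}" "c \<in> {1..n}" "d \<in> {1..n}" "distinct [p,q,c,d]"
     "r = cyc3 p q c \<or> r = cyc3 p c q" "s = cyc3 p q d \<or> s = cyc3 p d q"
    using decomp[OF r s c2] by blast
  have sq: "cyc3 p q d \<circ> cyc3 p q d = cyc3 p d q" "cyc3 p d q \<circ> cyc3 p d q = cyc3 p q d"
    using cyc3_sq h(5) by auto
  show ?thesis using h(6,7) hs[OF h(1-5)] sq by auto
qed

lemma same_supp: assumes r: "r \<in> T n" and s: "s \<in> T n" and m: "mv r = mv s"
  shows "r = s \<or> r = s \<circ> s"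
proof -
  obtain a b c where abc: "a \<noteq> b" "b \<noteq> c" "a \<noteq> c" "s = cyc3 a b c" using s unfolding T_def2 by blast
  have "mv r = {a,b,c}" using m abc cyc3_mv by simp
  from T_supp[OF r this abc(1-3)] show ?thesis using abc cyc3_sq by auto
qed

lemma card3_eq: "s \<in> T n \<Longrightarrow> r \<in> T n \<Longrightarrow> card (mv r \<inter> mv s) \<ge> 3 \<Longrightarrow> mv r = mv s"
proof -
  assume r: "r \<in> T n" and s: "s \<in> T n" and c: "card (mv r \<inter> mv s) \<ge> 3"
  have fr: "finite (mv r)" "card (mv r) = 3" using T_mv r by auto
  have fs: "finite (mv s)" "card (mv s) = 3" using T_mv s by auto
  have "card (mv r \<inter> mv s) \<le> 3" using fr card_mono[of "mv r" "mv r \<inter> mv s"] by auto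
  hence "card (mv r \<inter> mv s) = 3" using c by simp
  hence "mv r \<inter> mv s = mv r" "mv r \<inter> mv s = mv s"
    using fr fs card_subset_eq[of "mv r" "mv r \<inter> mv s"] card_subset_eq[of "mv s" "mv r \<inter> mv s"] by auto
  thus ?thesis by auto
qed

lemma P2: assumes s: "s \<in> T n" and x: "x \<in> T n"
  shows "\<not> (CAG_adj n x s \<and> CAG_adj n x (s \<circ> s))"
proof
  assume a: "CAG_adj n x s \<and> CAG_adj n x (s \<circ> s)"
  have c: "card (mv x \<inter> mv s) \<ge> 2" using adj_share x s a by blast
  show False
  proof (cases "card (mv x \<inter> mv s) = 2")
    case True
    thus False using share2[OF x s True] a by blast
  next
    case False
    hence "mv x = mv s" using c card3_eq[OF s x] by simp
    hence "x = s \<or> x = s \<circ> s" using same_supp x s by blast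
    thus False using a adj_irrefl by metis
  qed
qed

lemma P1: assumes n: "n \<ge> 5" and s: "s \<in> T n" and t: "t \<in> T n" and a: "CAG_adj n s t" and ne: "t \<noteq> s \<circ> s"
  shows "\<exists>x\<in>T n. CAG_adj n x s \<and> CAG_adj n x t"
proof -
  have c: "card (mv s \<inter> mv t) \<ge> 2" using adj_share s t a by blast
  show ?thesis
  proof (cases "card (mv s \<inter> mv t) = 2")
    case False
    hence "mv t = mv s" using c card3_eq[OF s t] by (simp add: Int_commute)
    hence "t = s \<or> t = s \<circ> s" using same_supp t s by blast
    thus ?thesis using a adj_irrefl ne by metis
  next
    case True
    obtain p q c d where h: "p \<in> {1..n}" "q \<in> {1..n}" "c \<in> {1..n}" "d \<in> {1..n}" "distinct [p,q,c,d]"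
       "s = cyc3 p q c \<or> s = cyc3 p c q" "t = cyc3 p q d \<or> t = cyc3 p d q"
      using decomp[OF s t True] by blast
    have "\<not> {1..n} \<subseteq> {p,q,c,d}"
    proof
      assume "{1..n} \<subseteq> {p,q,c,d}"
      hence "card {1..n} \<le> card {p,q,c,d}" by (intro card_mono) auto
      moreover have "card {p,q,c,d} \<le> 4" using card_length[of "[p,q,c,d]"] by simp
      ultimately show False using n by simp
    qed
    then obtain e where e: "e \<in> {1..n}" "e \<notin> {p,q,c,d}" by blast
    have d1: "distinct [p,q,e,c]" "distinct [p,q,e,d]" using h(5) e by auto
    have x1: "cyc3 p q e \<in> T n" "cyc3 p e q \<in> T n" using h e d1 unfolding T_def2 by auto
    show ?thesis using h(6,7)
      hs[OF h(1-5)] hs[OF h(1,2) e(1) h(3) d1(1)] hs[OF h(1,2) e(1) h(4) d1(2)] x1 a by blast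
  qed
qed

definition Phi :: "nat \<Rightarrow> (nat \<Rightarrow> nat) \<Rightarrow> (nat \<Rightarrow> nat) \<Rightarrow> bool" where
  "Phi n s t \<longleftrightarrow> \<not> CAG_adj n s t \<and> \<not> CAG_adj n s (t \<circ> t) \<and>
     \<not> (\<exists>r\<in>T n. (CAG_adj n r s \<or> CAG_adj n r (s \<circ> s)) \<and> (CAG_adj n r t \<or> CAG_adj n r (t \<circ> t)))"

lemma card3_split: assumes "finite X" "card X = 3" "x \<in> X" shows "\<exists>b c. X = {x,b,c} \<and> distinct [x,b,c]"
proof -
  have "card (X - {x}) = 2" using assms by simp
  then obtain b c where bc: "X - {x} = {b,c}" "b \<noteq> c" by (metis card_2_iff)
  hence "X = {x,b,c}" using assms(3) by auto
  moreover have "distinct [x,b,c]" using bc by auto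
  ultimately show ?thesis by blast
qed

lemma share_adj2: "r \<in> T n \<Longrightarrow> s \<in> T n \<Longrightarrow> CAG_adj n r s \<or> CAG_adj n r (s \<circ> s) \<Longrightarrow> card (mv r \<inter> mv s) \<ge> 2"
  using adj_share[of r n s] adj_share[of r n "s \<circ> s"] T_sq[of s n] by auto

lemma Phi_iff: assumes s: "s \<in> T n" and t: "t \<in> T n"
  shows "Phi n s t \<longleftrightarrow> mv s \<inter> mv t = {}"
proof
  assume d: "mv s \<inter> mv t = {}"
  have 1: "\<not> CAG_adj n s t" using share_adj2[OF s t] d by auto
  have 2: "\<not> CAG_adj n s (t \<circ> t)" using share_adj2[OF s t] d by auto
  have 3: "\<not> (CAG_adj n r s \<or> CAG_adj n r (s \<circ> s)) \<or> \<not> (CAG_adj n r t \<or> CAG_adj n r (t \<circ> t))" if r: "r \<in> T n" for r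
  proof (rule ccontr)
    assume "\<not> ?thesis"
    hence a: "card (mv r \<inter> mv s) \<ge> 2" "card (mv r \<inter> mv t) \<ge> 2" using share_adj2[OF r s] share_adj2[OF r t] by auto
    have fr: "finite (mv r)" "card (mv r) = 3" using T_mv[OF r] by auto
    have "card ((mv r \<inter> mv s) \<union> (mv r \<inter> mv t)) = card (mv r \<inter> mv s) + card (mv r \<inter> mv t)"
      using d fr by (intro card_Un_disjoint) auto
    moreover have "card ((mv r \<inter> mv s) \<union> (mv r \<inter> mv t)) \<le> card (mv r)" using fr by (intro card_mono) auto
    ultimately show False using a fr by simp
  qed
  show "Phi n s t" unfolding Phi_def using 1 2 3 by blast
next
  assume P: "Phi n s t"
  show "mv s \<inter> mv t = {}"
  proof (rule ccontr)
    assume ne: "mv s \<inter> mv t \<noteq> {}"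
    have fs: "finite (mv s)" "card (mv s) = 3" "mv s \<subseteq> {1..n}" using T_mv[OF s] by auto
    have ft: "finite (mv t)" "card (mv t) = 3" "mv t \<subseteq> {1..n}" using T_mv[OF t] by auto
    have c1: "card (mv s \<inter> mv t) \<ge> 1" using ne fs by (simp add: Suc_le_eq card_gt_0_iff)
    consider "card (mv s \<inter> mv t) = 1" | "card (mv s \<inter> mv t) = 2" | "card (mv s \<inter> mv t) \<ge> 3" using c1 by linarith
    then show False
    proof cases
      case 3
      hence "mv s = mv t" using card3_eq[OF t s] by blast
      hence "s = t \<or> s = t \<circ> t" using same_supp s t by blast
      moreover have "CAG_adj n t (t \<circ> t)" "CAG_adj n (t \<circ> t) t" using adj_sq[OF t] adj_sym by blast+
      ultimately show False using P unfolding Phi_def by blast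
    next
      case 2
      thus False using share2[OF s t] P unfolding Phi_def by blast
    next
      case 1
      then obtain x where x: "mv s \<inter> mv t = {x}" by (metis One_nat_def card_1_singleton_iff)
      obtain b c where bc: "mv s = {x,b,c}" "distinct [x,b,c]" using card3_split[OF fs(1,2)] x by blast
      obtain d e where de: "mv t = {x,d,e}" "distinct [x,d,e]" using card3_split[OF ft(1,2)] x by blast
      have bt: "b \<notin> mv t" using x bc by auto
      have ds: "d \<notin> mv s" using x de by auto
      have dist: "distinct [x,b,d]" using bc de bt by auto
      have r: "cyc3 x b d \<in> T n" using dist bc de fs(3) ft(3) unfolding T_def2 by auto
      have mr: "mv (cyc3 x b d) = {x,b,d}" using dist cyc3_mv by simp
      have "mv (cyc3 x b d) \<inter> mv s = {x,b}" using mr bc ds by auto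
      hence rs: "card (mv (cyc3 x b d) \<inter> mv s) = 2" using dist by simp
      have "mv (cyc3 x b d) \<inter> mv t = {x,d}" using mr de bt by auto
      hence rt: "card (mv (cyc3 x b d) \<inter> mv t) = 2" using dist by simp
      show False using share2[OF r s rs] share2[OF r t rt] r P unfolding Phi_def by blast
    qed
  qed
qed

lemma id_alt: "id \<in> alt_group_set n"
  unfolding alt_group_set_def by (simp add: permutes_id evenperm_id)

lemma adj_id: "CAG_adj n id y \<longleftrightarrow> y \<in> T n"
  using id_alt T_alt by (auto simp: adj_iff)

lemma stab_props: assumes g: "g \<in> CAG_stab n"
  shows "bij_betw g (alt_group_set n) (alt_group_set n)" "g id = id"
    "\<And>x y. x \<in> alt_group_set n \<Longrightarrow> y \<in> alt_group_set n \<Longrightarrow> CAG_adj n x y \<longleftrightarrow> CAG_adj n (g x) (g y)"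
  using g unfolding CAG_stab_def CAG_aut_def by auto

lemma g_T: assumes g: "g \<in> CAG_stab n" and s: "s \<in> T n" shows "g s \<in> T n"
  using stab_props[OF g] s id_alt T_alt[OF s] adj_id by metis

lemma g_Tsurj: assumes g: "g \<in> CAG_stab n" and t: "t \<in> T n" shows "\<exists>s\<in>T n. g s = t"
proof -
  obtain s where s: "s \<in> alt_group_set n" "g s = t" using stab_props(1)[OF g] T_alt[OF t]
    by (metis bij_betw_iff_bijections)
  have "CAG_adj n id s" using stab_props(2)[OF g] stab_props(3)[OF g, of id s] s t id_alt adj_id by metis
  thus ?thesis using s adj_id by blast
qed

lemma g_adjT: assumes g: "g \<in> CAG_stab n" and x: "x \<in> T n" and y: "y \<in> T n"
  shows "CAG_adj n (g x) (g y) \<longleftrightarrow> CAG_adj n x y"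
  using stab_props(3)[OF g] T_alt x y by metis

lemma g_sq: assumes n: "n \<ge> 5" and g: "g \<in> CAG_stab n" and s: "s \<in> T n"
  shows "g (s \<circ> s) = g s \<circ> g s"
proof (rule ccontr)
  assume ne: "g (s \<circ> s) \<noteq> g s \<circ> g s"
  have s2: "s \<circ> s \<in> T n" using T_sq[OF s] by blast
  have "CAG_adj n (g s) (g (s \<circ> s))" using g_adjT[OF g s s2] adj_sq[OF s] by blast
  then obtain x where x: "x \<in> T n" "CAG_adj n x (g s)" "CAG_adj n x (g (s \<circ> s))"
    using P1[OF n g_T[OF g s] g_T[OF g s2] _ ne] by blast
  obtain y where y: "y \<in> T n" "g y = x" using g_Tsurj[OF g x(1)] by blast
  have "CAG_adj n y s" "CAG_adj n y (s \<circ> s)" using x y g_adjT[OF g y(1) s] g_adjT[OF g y(1) s2] by auto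
  thus False using P2[OF s y(1)] by blast
qed

lemma g_Phi: assumes n: "n \<ge> 5" and g: "g \<in> CAG_stab n" and s: "s \<in> T n" and t: "t \<in> T n"
  shows "Phi n (g s) (g t) \<longleftrightarrow> Phi n s t"
proof -
  have s2: "s \<circ> s \<in> T n" and t2: "t \<circ> t \<in> T n" using T_sq s t by blast+
  have e1: "CAG_adj n (g s) (g t) \<longleftrightarrow> CAG_adj n s t" using g_adjT[OF g s t] .
  have e2: "CAG_adj n (g s) (g t \<circ> g t) \<longleftrightarrow> CAG_adj n s (t \<circ> t)"
    using g_adjT[OF g s t2] g_sq[OF n g t] by simp
  have e3: "(\<exists>r\<in>T n. (CAG_adj n r (g s) \<or> CAG_adj n r (g s \<circ> g s)) \<and> (CAG_adj n r (g t) \<or> CAG_adj n r (g t \<circ> g t)))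
     \<longleftrightarrow> (\<exists>r\<in>T n. (CAG_adj n r s \<or> CAG_adj n r (s \<circ> s)) \<and> (CAG_adj n r t \<or> CAG_adj n r (t \<circ> t)))"
  proof
    assume "\<exists>r\<in>T n. (CAG_adj n r (g s) \<or> CAG_adj n r (g s \<circ> g s)) \<and> (CAG_adj n r (g t) \<or> CAG_adj n r (g t \<circ> g t))"
    then obtain r where r: "r \<in> T n" "(CAG_adj n r (g s) \<or> CAG_adj n r (g s \<circ> g s)) \<and> (CAG_adj n r (g t) \<or> CAG_adj n r (g t \<circ> g t))" by blast
    obtain y where y: "y \<in> T n" "g y = r" using g_Tsurj[OF g r(1)] by blast
    show "\<exists>r\<in>T n. (CAG_adj n r s \<or> CAG_adj n r (s \<circ> s)) \<and> (CAG_adj n r t \<or> CAG_adj n r (t \<circ> t))"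
      using r y g_adjT[OF g y(1) s] g_adjT[OF g y(1) s2] g_adjT[OF g y(1) t] g_adjT[OF g y(1) t2]
        g_sq[OF n g s] g_sq[OF n g t] by metis
  next
    assume "\<exists>r\<in>T n. (CAG_adj n r s \<or> CAG_adj n r (s \<circ> s)) \<and> (CAG_adj n r t \<or> CAG_adj n r (t \<circ> t))"
    then obtain y where y: "y \<in> T n" "(CAG_adj n y s \<or> CAG_adj n y (s \<circ> s)) \<and> (CAG_adj n y t \<or> CAG_adj n y (t \<circ> t))" by blast
    show "\<exists>r\<in>T n. (CAG_adj n r (g s) \<or> CAG_adj n r (g s \<circ> g s)) \<and> (CAG_adj n r (g t) \<or> CAG_adj n r (g t \<circ> g t))"
      using y g_T[OF g y(1)] g_adjT[OF g y(1) s] g_adjT[OF g y(1) s2] g_adjT[OF g y(1) t] g_adjT[OF g y(1) t2]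
        g_sq[OF n g s] g_sq[OF n g t] by metis
  qed
  show ?thesis unfolding Phi_def using e1 e2 e3 by (simp add: g_sq[OF n g s])
qed

lemma sort3: "a \<noteq> b \<Longrightarrow> b \<noteq> c \<Longrightarrow> a \<noteq> c \<Longrightarrow> \<exists>i j k::nat. i < j \<and> j < k \<and> {a,b,c} = {i,j,k}"
  by (metis insert_commute linorder_neqE_nat)

lemma D_char: "D \<in> Delta n \<longleftrightarrow> (\<exists>s\<in>T n. D = {s, s \<circ> s})"
proof
  assume "D \<in> Delta n"
  then obtain i j k where h: "1 \<le> i" "i < j" "j < k" "k \<le> n" "D = Delta_ijk i j k" unfolding Delta_def by blast
  have "cyc3 i j k \<in> T n" using h unfolding T_def2 by (intro exI[of _ i] exI[of _ j] exI[of _ k]) auto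
  moreover have "D = {cyc3 i j k, cyc3 i j k \<circ> cyc3 i j k}" using h cyc3_sq[of i j k] by (simp add: Delta_ijk_def)
  ultimately show "\<exists>s\<in>T n. D = {s, s \<circ> s}" by blast
next
  assume "\<exists>s\<in>T n. D = {s, s \<circ> s}"
  then obtain s where s: "s \<in> T n" "D = {s, s \<circ> s}" by blast
  obtain a b c where abc: "a \<noteq> b" "b \<noteq> c" "a \<noteq> c" "s = cyc3 a b c" using s(1) unfolding T_def2 by blast
  obtain i j k where ijk: "i < j" "j < k" "{a,b,c} = {i,j,k}" using sort3[OF abc(1-3)] by blast
  have ms: "mv s = {i,j,k}" using abc ijk cyc3_mv by simp
  have rng: "1 \<le> i" "k \<le> n" using ms T_mv[OF s(1)] by auto
  have "s = cyc3 i j k \<or> s = cyc3 i k j" using T_supp[OF s(1) ms] ijk by simp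
  moreover have "cyc3 i j k \<circ> cyc3 i j k = cyc3 i k j" "cyc3 i k j \<circ> cyc3 i k j = cyc3 i j k"
    using cyc3_sq ijk by auto
  ultimately have "D = Delta_ijk i j k" using s(2) unfolding Delta_ijk_def by (auto simp: insert_commute)
  thus "D \<in> Delta n" using ijk rng unfolding Delta_def by blast
qed

lemma D_mem: assumes "D \<in> Delta n" "f \<in> D" shows "f \<in> T n \<and> D = {f, f \<circ> f}"
proof -
  obtain s where s: "s \<in> T n" "D = {s, s \<circ> s}" using assms(1) D_char by blast
  show ?thesis using assms(2) s T_sq[OF s(1)] by auto
qed

lemma D_mv: "f \<in> Delta_ijk i j k \<Longrightarrow> i < j \<Longrightarrow> j < k \<Longrightarrow> mv f = {i,j,k}"
  unfolding Delta_ijk_def using cyc3_mv[of i j k] cyc3_mv[of i k j] by auto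

lemma L_char: assumes D: "D \<in> Delta n" and E: "E \<in> Delta n" and s: "s \<in> D" and t: "t \<in> E"
  shows "L_adj n D E \<longleftrightarrow> mv s \<inter> mv t = {}"
proof
  assume "L_adj n D E"
  then obtain i j k p q r where h: "i < j" "j < k" "p < q" "q < r" "D = Delta_ijk i j k" "E = Delta_ijk p q r"
    "{i,j,k} \<inter> {p,q,r} = {}" unfolding L_adj_def by blast
  thus "mv s \<inter> mv t = {}" using D_mv[of s i j k] D_mv[of t p q r] s t by simp
next
  assume d: "mv s \<inter> mv t = {}"
  obtain i j k where h: "1 \<le> i" "i < j" "j < k" "k \<le> n" "D = Delta_ijk i j k" using D unfolding Delta_def by blast
  obtain p q r where h2: "1 \<le> p" "p < q" "q < r" "r \<le> n" "E = Delta_ijk p q r" using E unfolding Delta_def by blast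
  have "{i,j,k} \<inter> {p,q,r} = {}" using D_mv[of s i j k] D_mv[of t p q r] s t h h2 d by simp
  thus "L_adj n D E" unfolding L_adj_def using h h2 by blast
qed

lemma g_image: assumes n: "n \<ge> 5" and g: "g \<in> CAG_stab n" and s: "s \<in> T n"
  shows "g ` {s, s \<circ> s} = {g s, g s \<circ> g s}"
  using g_sq[OF n g s] by simp

theorem lemma3p5:
  fixes n :: nat and g :: "(nat \<Rightarrow> nat) \<Rightarrow> (nat \<Rightarrow> nat)"
  assumes "n \<ge> 5" and "g \<in> CAG_stab n"
  shows "(\<forall>D \<in> Delta n. g ` D \<in> Delta n) \<and> L_aut n (\<lambda>D. g ` D)"
proof -
  note n = assms(1) and g = assms(2)
  have P1': "g ` D \<in> Delta n" if D: "D \<in> Delta n" for D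
  proof -
    obtain s where s: "s \<in> T n" "D = {s, s \<circ> s}" using D D_char by blast
    show ?thesis unfolding s(2) g_image[OF n g s(1)] D_char using g_T[OF g s(1)] by blast
  qed
  have sub: "D \<subseteq> alt_group_set n" if "D \<in> Delta n" for D
    using D_mem[OF that] T_alt by blast
  have injg: "inj_on g (alt_group_set n)" using stab_props(1)[OF g] bij_betw_def by blast
  have inj: "inj_on (\<lambda>D. g ` D) (Delta n)"
    by (rule inj_onI) (use inj_on_image_eq_iff[OF injg] sub in blast)
  have surj: "(\<lambda>D. g ` D) ` Delta n = Delta n"
  proof
    show "(\<lambda>D. g ` D) ` Delta n \<subseteq> Delta n" using P1' by blast
    show "Delta n \<subseteq> (\<lambda>D. g ` D) ` Delta n"
    proof
      fix E assume E: "E \<in> Delta n"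
      obtain t where t: "t \<in> T n" "E = {t, t \<circ> t}" using E D_char by blast
      obtain s where s: "s \<in> T n" "g s = t" using g_Tsurj[OF g t(1)] by blast
      have "{s, s \<circ> s} \<in> Delta n" using s(1) D_char by blast
      moreover have "g ` {s, s \<circ> s} = E" using g_image[OF n g s(1)] s t by simp
      ultimately show "E \<in> (\<lambda>D. g ` D) ` Delta n" by blast
    qed
  qed
  have adj: "L_adj n D E \<longleftrightarrow> L_adj n (g ` D) (g ` E)" if D: "D \<in> Delta n" and E: "E \<in> Delta n" for D E
  proof -
    obtain s where s: "s \<in> T n" "D = {s, s \<circ> s}" using D D_char by blast
    obtain t where t: "t \<in> T n" "E = {t, t \<circ> t}" using E D_char by blast
    have "L_adj n D E \<longleftrightarrow> mv s \<inter> mv t = {}" using L_char[OF D E] s t by blast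
    also have "\<dots> \<longleftrightarrow> Phi n s t" using Phi_iff[OF s(1) t(1)] by simp
    also have "\<dots> \<longleftrightarrow> Phi n (g s) (g t)" using g_Phi[OF n g s(1) t(1)] by simp
    also have "\<dots> \<longleftrightarrow> mv (g s) \<inter> mv (g t) = {}" using Phi_iff[OF g_T[OF g s(1)] g_T[OF g t(1)]] by simp
    also have "\<dots> \<longleftrightarrow> L_adj n (g ` D) (g ` E)" using L_char[OF P1'[OF D] P1'[OF E], of "g s" "g t"] s t by blast
    finally show ?thesis .
  qed
  show ?thesis using P1' inj surj adj unfolding L_aut_def bij_betw_def by blast
qed

end
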